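(* Let $G^-,G^+$ be entire functions with $G^-(1/2)=G^+(1/2)$ and $(G^-)'(1/2)\ne(G^+)'(1/2)$, and let $g^\pm(b)=G^-(b)$ for $b<1/2$, $g^\pm(b)=G^+(b)$ for $b\ge1/2$. Then there exists $\rho_0>0$ such that, with $A_0=\,]-1-\rho_0,1+\rho_0[$, the function $\psi_0:A_0\to\mathbb C$, $\psi_0(a)=g^\pm((1+a)/2)$, is a regular $\mathbb C$-supershift on $A_0$. Consequently, the fact that a function $\psi$ is a smooth regular $\mathbb C$-supershift on some open interval $A\subset\mathbb R$ of length strictly larger than $2$ does not in general imply that $\psi$ is real analytic on $A$.
   Context: For an open interval $A\subset\mathbb R$ of length $R>2$ (possibly infinite), set $\mathbb A=\{(a,a')\in\mathbb R\times A:\ a'+[-1,1]\subset A,\ a+a'\in A\}$. For a sequence $\boldsymbol\epsilon=(\epsilon_N)_{N\ge1}$ with $\epsilon_N\in[0,1)$ and $\epsilon_N\to0$, put $h^{\boldsymbol\epsilon}_{N,\nu}=1-2\,\frac{\nu+\epsilon_N(N-\nu)}{N}$ for $0\le\nu\le N$. For a continuous $\psi:A\to\mathbb C$ and $(a,a')\in\mathbb A$ set $$S_N^{\boldsymbol\epsilon}[\psi](a,a')=\sum_{\nu=0}^N\binom N\nu\Big(\frac{1+a}2\Big)^{N-\nu}\Big(\frac{1-a}2\Big)^{\nu}\psi\big(a'+h^{\boldsymbol\epsilon}_{N,\nu}\big).$$ A continuous $\psi:A\to\mathbb C$ is called a regular $\mathbb C$-supershift on $A$ if (1) for every such sequence $\boldsymbol\epsilon$,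 $S_N^{\boldsymbol\epsilon}[\psi](a,a')\to\psi(a+a')$ as $N\to\infty$ uniformly on compact subsets of $\mathbb A$; and (2) for every family $\{\boldsymbol\epsilon_{\iota'}=(\epsilon_{\iota',N})_{N\ge1}:\iota'\in I'\}$ of such sequences with $\sup_{\iota'\in I'}\epsilon_{\iota',N}\to0$ as $N\to\infty$, the convergence in (1) is uniform with respect to $\iota'\in I'$ on each compact subset of $\mathbb A$. *)

theory Defs
  imports "HOL-Analysis.Analysis" "HOL-Complex_Analysis.Complex_Analysis"
begin

definition shift_h :: "(nat \<Rightarrow> real) \<Rightarrow> nat \<Rightarrow> nat \<Rightarrow> real" where
  "shift_h eps N \<nu> = 1 - 2 * (real \<nu> + eps N * (real N - real \<nu>)) / real N"

definition supershift_S ::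
  "(nat \<Rightarrow> real) \<Rightarrow> (real \<Rightarrow> complex) \<Rightarrow> nat \<Rightarrow> real \<Rightarrow> real \<Rightarrow> complex" where
  "supershift_S eps psi N a a' =
     (\<Sum>\<nu> = 0..N. complex_of_real (real (N choose \<nu>) * ((1 + a) / 2) ^ (N - \<nu>) * ((1 - a) / 2) ^ \<nu>)
                   * psi (a' + shift_h eps N \<nu>))"

definition dom_A :: "real set \<Rightarrow> (real \<times> real) set" where
  "dom_A A = {(a, a'). a' \<in> A \<and> {a' - 1 .. a' + 1} \<subseteq> A \<and> a + a' \<in> A}"

definition admissible_seq :: "(nat \<Rightarrow> real) \<Rightarrow> bool" where
  "admissible_seq eps \<longleftrightarrow> (\<forall>N\<ge>1. 0 \<le> eps N \<and> eps N < 1) \<and> eps \<longlonglongrightarrow> 0"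

definition regular_C_supershift :: "real set \<Rightarrow> (real \<Rightarrow> complex) \<Rightarrow> bool" where
  "regular_C_supershift A psi \<longleftrightarrow>
     continuous_on A psi \<and>
     (\<forall>eps. admissible_seq eps \<longrightarrow>
        (\<forall>K. compact K \<and> K \<subseteq> dom_A A \<longrightarrow>
           uniform_limit K (\<lambda>N (a, a'). supershift_S eps psi N a a')
                           (\<lambda>(a, a'). psi (a + a')) sequentially)) \<and>
     (\<forall>E :: (nat \<Rightarrow> real) set.
        (\<forall>eps\<in>E. admissible_seq eps) \<and>
        (\<forall>\<delta>>0. \<forall>\<^sub>F N in sequentially. \<forall>eps\<in>E. eps N < \<delta>) \<longrightarrow>
        (\<forall>K. compact K \<and> K \<subseteq> dom_A A \<longrightarrow>
           (\<forall>e>0. \<forall>\<^sub>F N in sequentially. \<forall>eps\<in>E. \<forall>(a, a')\<in>K.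
               norm (supershift_S eps psi N a a' - psi (a + a')) < e)))"

end

theory Submission
  imports Defs "HOL-Computational_Algebra.Formal_Power_Series"
begin


definition maj :: "real fps \<Rightarrow> real fps \<Rightarrow> bool" where
  "maj f g \<longleftrightarrow> (\<forall>n. \<bar>f $ n\<bar> \<le> g $ n)"

lemma maj_nonneg: "maj f g \<Longrightarrow> 0 \<le> g $ n"
  unfolding maj_def by (meson abs_ge_zero order_trans)

lemma maj_mult: assumes "maj f F" "maj g G" shows "maj (f*g) (F*G)"
  unfolding maj_def
proof
  fix n
  have "\<bar>(f*g) $ n\<bar> \<le> (\<Sum>i=0..n. \<bar>f$i * g$(n - i)\<bar>)"
    unfolding fps_mult_nth by (rule sum_abs)
  also have "\<dots> \<le> (\<Sum>i=0..n. F$i * G$(n - i))"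
  proof (rule sum_mono)
    fix i
    show "\<bar>f$i * g$(n - i)\<bar> \<le> F$i * G$(n - i)"
      unfolding abs_mult using assms unfolding maj_def
      by (intro mult_mono) (auto intro: order_trans[OF abs_ge_zero])
  qed
  finally show "\<bar>(f*g) $ n\<bar> \<le> (F*G) $ n" unfolding fps_mult_nth .
qed

lemma maj_add: "maj f F \<Longrightarrow> maj g G \<Longrightarrow> maj (f+g) (F+G)"
  unfolding maj_def by (auto intro: order_trans[OF abs_triangle_ineq] add_mono)

lemma maj_diff: "maj f F \<Longrightarrow> maj g G \<Longrightarrow> maj (f-g) (F+G)"
  unfolding maj_def by (auto intro: order_trans[OF abs_triangle_ineq4] add_mono)

lemma maj_one: "maj 1 1"
  unfolding maj_def by (simp add: fps_one_nth)

lemma maj_power: "maj f F \<Longrightarrow> maj (f^n) (F^n)"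
  by (induction n) (auto simp: maj_one maj_mult)

lemma maj_sum: assumes "\<And>i. i \<in> S \<Longrightarrow> maj (f i) (F i)" shows "maj (sum f S) (sum F S)"
  unfolding maj_def fps_sum_nth
proof
  fix n
  have "\<bar>\<Sum>k\<in>S. f k $ n\<bar> \<le> (\<Sum>k\<in>S. \<bar>f k $ n\<bar>)" by (rule sum_abs)
  also have "\<dots> \<le> (\<Sum>k\<in>S. F k $ n)" using assms unfolding maj_def by (intro sum_mono) auto
  finally show "\<bar>\<Sum>k\<in>S. f k $ n\<bar> \<le> (\<Sum>k\<in>S. F k $ n)" .
qed

lemma maj_exp: "\<bar>t\<bar> \<le> T \<Longrightarrow> maj (fps_exp t) (fps_exp T)"
  unfolding maj_def by (auto simp: abs_divide power_abs intro!: divide_right_mono power_mono)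

lemma maj_mono: "maj f F \<Longrightarrow> (\<And>n. F$n \<le> G$n) \<Longrightarrow> maj f G"
  unfolding maj_def by (meson order_trans)



definition wgt :: "nat \<Rightarrow> real \<Rightarrow> nat \<Rightarrow> real" where
  "wgt N a \<nu> = real (N choose \<nu>) * ((1+a)/2)^(N-\<nu>) * ((1-a)/2)^\<nu>"

lemma gen_id:
  fixes eps :: "nat \<Rightarrow> real" and x0 a :: real
  assumes N: "N \<ge> 1"
  defines "c \<equiv> (1 - eps N) / real N"
  shows "(\<Sum>\<nu>=0..N. fps_const (wgt N a \<nu>) * fps_exp (x0 + shift_h eps N \<nu>))
       = fps_exp (x0 - eps N) * (fps_const ((1+a)/2) * fps_exp c + fps_const ((1-a)/2) * fps_exp (-c))^N"
proof -
  let ?p = "(1+a)/2" and ?q = "(1-a)/2" and ?E = "fps_exp :: real \<Rightarrow> real fps"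
  have "(fps_const ?p * ?E c + fps_const ?q * ?E (-c))^N = (fps_const ?q * ?E (-c) + fps_const ?p * ?E c)^N"
    by (simp add: add.commute)
  also have "\<dots> = (\<Sum>k\<le>N. of_nat (N choose k) * (fps_const ?q * ?E (-c))^k * (fps_const ?p * ?E c)^(N-k))"
    by (rule binomial_ring)
  finally have bin: "(fps_const ?p * ?E c + fps_const ?q * ?E (-c))^N = \<dots>" .
  have trm: "fps_const (wgt N a \<nu>) * ?E (x0 + shift_h eps N \<nu>) =
     ?E (x0 - eps N) * (of_nat (N choose \<nu>) * (fps_const ?q * ?E (-c))^\<nu> * (fps_const ?p * ?E c)^(N-\<nu>))"
    if "\<nu> \<le> N" for \<nu>
  proof -
    have arg: "x0 + shift_h eps N \<nu> = (x0 - eps N) + (of_nat \<nu> * (-c) + of_nat (N - \<nu>) * c)"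
      using that N unfolding c_def shift_h_def by (simp add: of_nat_diff field_simps)
    have "?E (x0 - eps N) * (of_nat (N choose \<nu>) * (fps_const ?q * ?E (-c))^\<nu> * (fps_const ?p * ?E c)^(N-\<nu>))
       = fps_const (real (N choose \<nu>) * ?q^\<nu> * ?p^(N-\<nu>)) * (?E (x0 - eps N) * (?E (-c) ^ \<nu> * ?E c ^ (N-\<nu>)))"
      by (simp add: power_mult_distrib fps_const_power fps_of_nat[symmetric] mult_ac)
    also have "\<dots> = fps_const (wgt N a \<nu>) * ?E (x0 + shift_h eps N \<nu>)"
      unfolding fps_exp_power_mult arg fps_exp_add_mult[symmetric] wgt_def by (simp add: mult_ac)
    finally show ?thesis by simp
  qed
  show ?thesis
    unfolding bin sum_distrib_left atLeast0AtMost
    by (rule sum.cong) (auto simp: trm)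
qed

lemma gen_coeff:
  assumes "N \<ge> 1"
  shows "(\<Sum>\<nu>=0..N. wgt N a \<nu> * (x0 + shift_h eps N \<nu>)^k)
      = fact k * (fps_exp (x0 - eps N) * (fps_const ((1+a)/2) * fps_exp ((1 - eps N) / real N)
           + fps_const ((1-a)/2) * fps_exp (-((1 - eps N) / real N)))^N) $ k"
  unfolding gen_id[OF assms, symmetric] fps_sum_nth
  by (simp add: sum_distrib_left)



lemma abs_pow_diff_le:
  fixes u v M :: real
  assumes "\<bar>u\<bar> \<le> M" "\<bar>v\<bar> \<le> M"
  shows "\<bar>u^k - v^k\<bar> \<le> real k * M^(k-1) * \<bar>u - v\<bar>"
proof -
  have M0: "0 \<le> M" using assms(1) by linarith
  have eq: "\<bar>u^k - v^k\<bar> = \<bar>u - v\<bar> * \<bar>\<Sum>i<k. v^(k - Suc i) * u^i\<bar>"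
    by (simp add: power_diff_sumr2 abs_mult)
  have le: "\<bar>\<Sum>i<k. v^(k - Suc i) * u^i\<bar> \<le> (\<Sum>i<k. M^(k - Suc i) * M^i)"
  proof -
    have "\<bar>\<Sum>i<k. v^(k - Suc i) * u^i\<bar> \<le> (\<Sum>i<k. \<bar>v^(k - Suc i) * u^i\<bar>)" by (rule sum_abs)
    also have "\<dots> \<le> (\<Sum>i<k. M^(k - Suc i) * M^i)"
      by (intro sum_mono) (auto simp: abs_mult power_abs intro!: mult_mono power_mono assms M0 zero_le_power)
    finally show ?thesis .
  qed
  have s: "(\<Sum>i<k. M^(k - Suc i) * M^i) = real k * M^(k-1)"
  proof -
    have "(\<Sum>i<k. M^(k - Suc i) * M^i) = (\<Sum>i<k. M^(k-1))"
      by (intro sum.cong refl) (auto simp flip: power_add)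
    then show ?thesis by simp
  qed
  show ?thesis unfolding eq using le s by (simp add: mult_left_mono mult.commute)
qed

lemma moment:
  fixes eps :: "nat \<Rightarrow> real" and a xb :: real
  assumes N: "N \<ge> 1" and e0: "0 \<le> eps N" and e1: "eps N < 1" and a2: "\<bar>a\<bar> \<le> 2" and x2: "\<bar>xb\<bar> \<le> 2"
  shows "\<bar>\<Sum>\<nu>=0..N. wgt N a \<nu> * (xb + shift_h eps N \<nu>)^k\<bar> \<le> 5^k"
    and "\<bar>(\<Sum>\<nu>=0..N. wgt N a \<nu> * (xb + shift_h eps N \<nu>)^k) - (xb + a)^k\<bar>
            \<le> 8 * fact k * 5^k * (1 / real N + eps N)"
proof -
  define e where "e = eps N"
  define c where "c = (1 - e) / real N"
  define p where "p = (1+a)/2"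
  define q where "q = (1-a)/2"
  let ?E = "fps_exp :: real \<Rightarrow> real fps"
  define f where "f = fps_const p * ?E c + fps_const q * ?E (-c)"
  define g where "g = ?E (a*c)"
  have Npos: "real N > 0" using N by simp
  have c0: "0 \<le> c" unfolding c_def e_def using e1 by simp
  have cN: "c * real N = 1 - e" unfolding c_def using Npos by simp
  have c1: "c \<le> 1 / real N" unfolding c_def e_def using e0 Npos by (simp add: divide_right_mono)
  have pq: "\<bar>p\<bar> + \<bar>q\<bar> \<le> 2" proof -
    have "\<bar>1+a\<bar> + \<bar>1-a\<bar> \<le> 4" using a2 by arith
    then show ?thesis unfolding p_def q_def by (simp add: abs_divide)
  qed
  have pq1: "p + q = 1" "p - q = a" unfolding p_def q_def by (simp_all add: field_simps)
  have G: "(\<Sum>\<nu>=0..N. wgt N a \<nu> * (xb + shift_h eps N \<nu>)^k) = fact k * (?E (xb - e) * f^N) $ k"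
    unfolding gen_coeff[OF N] f_def c_def e_def p_def q_def ..
  have majf: "maj f (?E (2*c))"
    unfolding maj_def
  proof
    fix n
    have "\<bar>p * c^n + q * (-c)^n\<bar> \<le> (2*c)^n"
    proof (cases n)
      case 0 then show ?thesis using pq1 by simp
    next
      case (Suc m)
      have "\<bar>p * c^n + q * (-c)^n\<bar> \<le> \<bar>p\<bar> * c^n + \<bar>q\<bar> * c^n"
        using c0 by (auto simp: abs_mult power_abs intro: order_trans[OF abs_triangle_ineq])
      also have "\<dots> \<le> 2 * c^n" using pq c0 by (simp add: distrib_right[symmetric] mult_right_mono)
      also have "\<dots> \<le> 2^n * c^n" using Suc c0 by (intro mult_right_mono) (auto simp: self_le_power)
      finally show ?thesis by (simp add: power_mult_distrib)
    qed
    then show "\<bar>f $ n\<bar> \<le> ?E (2*c) $ n"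
      unfolding f_def by (simp add: abs_divide add_divide_distrib[symmetric] divide_right_mono)
  qed
  have majg: "maj g (?E (2*c))" unfolding g_def using a2 c0
    by (intro maj_exp) (simp add: abs_mult mult_right_mono)
  have xbe: "\<bar>xb - e\<bar> \<le> 3" using x2 e0 e1 unfolding e_def by linarith
  define Y where "Y = \<bar>xb - e\<bar> + 2 * c * real N"
  have c2N: "2 * c * real N = 2 * (1 - e)" using cN by simp
  have Y5: "Y \<le> 5" "0 \<le> Y" unfolding Y_def c2N using xbe e0 e1 unfolding e_def by auto
  have maj1: "maj (?E (xb - e) * f^N) (?E Y)"
  proof -
    have "maj (?E (xb - e) * f^N) (?E \<bar>xb - e\<bar> * ?E (2*c)^N)"
      by (intro maj_mult maj_power majf maj_exp) simp
    also have "?E \<bar>xb - e\<bar> * ?E (2*c)^N = ?E Y"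
      unfolding fps_exp_power_mult Y_def fps_exp_add_mult by (simp add: mult_ac)
    finally show ?thesis .
  qed
  show "\<bar>\<Sum>\<nu>=0..N. wgt N a \<nu> * (xb + shift_h eps N \<nu>)^k\<bar> \<le> 5^k"
  proof -
    have "\<bar>(?E (xb - e) * f^N) $ k\<bar> \<le> Y^k / fact k" using maj1 unfolding maj_def by simp
    then have "\<bar>fact k * (?E (xb - e) * f^N) $ k\<bar> \<le> Y^k"
      by (simp add: abs_mult field_simps)
    also have "\<dots> \<le> 5^k" using Y5 by (intro power_mono) auto
    finally show ?thesis unfolding G .
  qed
  define S where "S = (\<Sum>i<N. g^(N - Suc i) * f^i)"
  define \<rho> where "\<rho> = fps_const (8*c^2) * (fps_X^2 * ?E (2*c))"
  have majfg: "maj (f - g) \<rho>"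
    unfolding maj_def
  proof
    fix n
    have fg: "(f - g) $ n = (p * c^n + q * (-c)^n - (a*c)^n) / fact n"
      unfolding f_def g_def by (simp add: diff_divide_distrib add_divide_distrib)
    show "\<bar>(f - g) $ n\<bar> \<le> \<rho> $ n"
    proof (cases "n < 2")
      case True
      then have "n = 0 \<or> n = 1" by auto
      then have "(f - g) $ n = 0" unfolding fg using pq1
        by (auto simp: algebra_simps)
      moreover have "0 \<le> \<rho> $ n" unfolding \<rho>_def using True by (simp add: fps_X_power_mult_nth)
      ultimately show ?thesis by simp
    next
      case False
      then obtain m where m: "n = m + 2" by (metis add.commute le_Suc_ex not_less)
      have "\<bar>p * c^n + q * (-c)^n - (a*c)^n\<bar> \<le> \<bar>p\<bar> * c^n + \<bar>q\<bar> * c^n + \<bar>a\<bar>^n * c^n"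
        using c0 by (auto simp: abs_mult power_abs power_mult_distrib
             intro!: order_trans[OF abs_triangle_ineq4] order_trans[OF add_mono[OF abs_triangle_ineq order_refl]])
      also have "\<dots> \<le> 2 * c^n + 2^n * c^n"
        using pq c0 a2 by (intro add_mono) (auto simp: distrib_right[symmetric] mult_right_mono power_mono)
      also have "\<dots> \<le> 8 * c^2 * (2*c)^m"
      proof -
        have "(1::real) \<le> 2^m" by (rule one_le_power) simp
        then have "1 * c^n \<le> 2^m * c^n" using c0 by (intro mult_right_mono) auto
        moreover have "0 \<le> (2::real)^m * c^n" using c0 by simp
        ultimately have i1: "2 * c^n \<le> 4 * (2^m * c^n)" by linarith
        have i2: "(2::real)^n * c^n = 4 * (2^m * c^n)" unfolding m by (simp add: power_add)
        have i3: "8 * c^2 * (2*c)^m = 8 * (2^m * c^n)" unfolding m by (simp add: power_add power_mult_distrib power2_eq_square)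
        show ?thesis using i1 i2 i3 by linarith
      qed
      finally have num: "\<bar>p * c^n + q * (-c)^n - (a*c)^n\<bar> \<le> 8 * c^2 * (2*c)^m" .
      have "\<bar>(f - g) $ n\<bar> \<le> 8 * c^2 * (2*c)^m / fact n"
        unfolding fg abs_divide using num by (simp add: divide_right_mono)
      also have "\<dots> \<le> 8 * c^2 * (2*c)^m / fact m"
        using c0 unfolding m by (intro divide_left_mono fact_mono) (auto simp del: fact_Suc)
      also have "\<dots> = \<rho> $ n" unfolding \<rho>_def m by (simp add: fps_X_power_mult_nth)
      finally show ?thesis .
    qed
  qed
  have majS: "maj S (\<Sum>i<N. ?E (2*c)^(N - Suc i) * ?E (2*c)^i)"
    unfolding S_def by (intro maj_sum maj_mult maj_power majf majg)
  have Ssum: "(\<Sum>i<N. ?E (2*c)^(N - Suc i) * ?E (2*c)^i) = of_nat N * ?E (2*c)^(N-1)"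
  proof -
    have "(\<Sum>i<N. ?E (2*c)^(N - Suc i) * ?E (2*c)^i) = (\<Sum>i<N. ?E (2*c)^(N-1))"
      by (intro sum.cong refl) (auto simp flip: power_add)
    then show ?thesis by simp
  qed
  define M where "M = fps_const (8*c^2 * real N) * (fps_X^2 * ?E Y)"
  have majM: "maj (?E (xb - e) * (f^N - g^N)) M"
  proof -
    have "f^N - g^N = (f - g) * S" unfolding S_def by (rule power_diff_sumr2)
    then have "maj (?E (xb - e) * (f^N - g^N)) (?E \<bar>xb - e\<bar> * (\<rho> * (of_nat N * ?E (2*c)^(N-1))))"
      using majS unfolding Ssum by (auto intro!: maj_mult majfg maj_exp)
    also have "?E \<bar>xb - e\<bar> * (\<rho> * (of_nat N * ?E (2*c)^(N-1))) = M"
    proof -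
      have "?E \<bar>xb - e\<bar> * ?E (2*c) * ?E (2*c)^(N-1) = ?E Y"
        unfolding fps_exp_power_mult Y_def fps_exp_add_mult[symmetric]
        using N by (simp add: of_nat_diff algebra_simps)
      note H = this
      have "?E \<bar>xb - e\<bar> * (\<rho> * (of_nat N * ?E (2*c)^(N-1)))
          = fps_const (8*c^2) * fps_const (real N) * fps_X^2 * (?E \<bar>xb - e\<bar> * ?E (2*c) * ?E (2*c)^(N-1))"
        unfolding \<rho>_def fps_of_nat[symmetric] by (simp only: mult_ac)
      also have "\<dots> = M" unfolding H M_def fps_const_mult by (simp only: mult_ac)
      finally show ?thesis .
    qed
    finally show ?thesis .
  qed
  have Mk: "M $ k \<le> 8 / real N * 5^k"
  proof -
    have "M $ k = 8*c^2 * real N * (if k < 2 then 0 else Y^(k-2) / fact (k-2))"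
      unfolding M_def by (simp add: fps_X_power_mult_nth)
    also have "\<dots> \<le> 8 / real N * 5^k"
    proof -
      have A: "8*c^2 * real N \<le> 8 / real N"
      proof -
        have "c^2 \<le> (1/real N)^2" using c0 c1 by (intro power_mono) auto
        then have "c^2 * real N \<le> (1/real N)^2 * real N" using Npos by (intro mult_right_mono) auto
        also have "\<dots> = 1 / real N" using Npos by (simp add: power2_eq_square)
        finally show ?thesis by simp
      qed
      have B: "(if k < 2 then 0 else Y^(k-2) / fact (k-2)) \<le> (5::real)^k"
      proof (cases "k < 2")
        case False
        have "Y^(k-2) * 1 \<le> Y^(k-2) * fact (k-2)" using Y5 by (intro mult_left_mono) (auto simp: fact_ge_1)
        then have "Y^(k-2) / fact (k-2) \<le> Y^(k-2)" by (simp add: divide_le_eq)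
        also have "\<dots> \<le> 5^(k-2)" using Y5 by (intro power_mono) auto
        also have "\<dots> \<le> 5^k" by (intro power_increasing) auto
        finally show ?thesis using False by simp
      qed simp
      have C: "0 \<le> (if k < 2 then 0 else Y^(k-2) / fact (k-2))" using Y5 by simp
      show ?thesis using mult_mono[OF A B] C Npos by simp
    qed
    finally show ?thesis .
  qed
  define u where "u = xb - e + a * (1 - e)"
  have gN: "?E (xb - e) * g^N = ?E u"
  proof -
    have "real N * (a * c) = a * (1 - e)" using cN by (metis mult.commute mult.left_commute)
    then show ?thesis unfolding g_def fps_exp_power_mult u_def fps_exp_add_mult[symmetric] by simp
  qed
  have split: "?E (xb - e) * f^N - ?E (xb + a) = ?E (xb - e) * (f^N - g^N) + (?E u - ?E (xb + a))"
    unfolding gN[symmetric] by (simp add: algebra_simps)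
  have "\<bar>(?E (xb - e) * f^N) $ k - (xb+a)^k / fact k\<bar>
        \<le> \<bar>(?E (xb - e) * (f^N - g^N)) $ k\<bar> + \<bar>(u^k - (xb+a)^k) / fact k\<bar>"
  proof -
    have "(?E (xb - e) * f^N) $ k - (xb+a)^k / fact k = (?E (xb - e) * (f^N - g^N)) $ k + (u^k - (xb+a)^k) / fact k"
      using arg_cong[OF split, of "\<lambda>F. F $ k"] by (simp add: diff_divide_distrib)
    then show ?thesis by (metis abs_triangle_ineq)
  qed
  also have "\<dots> \<le> 8 / real N * 5^k + real k * 5^(k-1) * (3 * e) / fact k"
  proof (intro add_mono)
    show "\<bar>(?E (xb - e) * (f^N - g^N)) $ k\<bar> \<le> 8 / real N * 5^k"
      using majM Mk unfolding maj_def by (meson order_trans)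
    have "\<bar>u^k - (xb+a)^k\<bar> \<le> real k * 5^(k-1) * \<bar>u - (xb + a)\<bar>"
    proof (rule abs_pow_diff_le)
      have "\<bar>a\<bar> * (1 - e) \<le> 2 * 1" using a2 e0 e1 unfolding e_def by (intro mult_mono) auto
      moreover have "\<bar>a * (1 - e)\<bar> = \<bar>a\<bar> * (1 - e)" using e1 unfolding e_def by (simp add: abs_mult)
      ultimately show "\<bar>u\<bar> \<le> 5" unfolding u_def using xbe by linarith
      show "\<bar>xb + a\<bar> \<le> 5" using x2 a2 by linarith
    qed
    also have "\<bar>u - (xb + a)\<bar> \<le> 3 * e"
    proof -
      have "u - (xb + a) = - (e * (1 + a))" unfolding u_def by (simp add: algebra_simps)
      then have "\<bar>u - (xb + a)\<bar> = e * \<bar>1 + a\<bar>" using e0 unfolding e_def by (simp add: abs_mult)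
      also have "\<dots> \<le> e * 3" using a2 e0 unfolding e_def by (intro mult_left_mono) auto
      finally show ?thesis by simp
    qed
    then have "real k * 5^(k-1) * \<bar>u - (xb + a)\<bar> \<le> real k * 5^(k-1) * (3 * e)"
      by (intro mult_left_mono) auto
    finally show "\<bar>(u^k - (xb+a)^k) / fact k\<bar> \<le> real k * 5^(k-1) * (3 * e) / fact k"
      by (simp add: abs_divide divide_right_mono)
  qed
  finally have D: "\<bar>(?E (xb - e) * f^N) $ k - (xb+a)^k / fact k\<bar> \<le> 8 / real N * 5^k + real k * 5^(k-1) * (3 * e) / fact k" .
  have "\<bar>(\<Sum>\<nu>=0..N. wgt N a \<nu> * (xb + shift_h eps N \<nu>)^k) - (xb + a)^k\<bar>
      = fact k * \<bar>(?E (xb - e) * f^N) $ k - (xb+a)^k / fact k\<bar>"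
  proof -
    have "fact k * (?E (xb - e) * f^N) $ k - (xb + a)^k = fact k * ((?E (xb - e) * f^N) $ k - (xb+a)^k / fact k)"
      by (simp add: right_diff_distrib)
    then show ?thesis unfolding G by (simp add: abs_mult)
  qed
  also have "\<dots> \<le> fact k * (8 / real N * 5^k + real k * 5^(k-1) * (3 * e) / fact k)"
    using D by (intro mult_left_mono) auto
  also have "\<dots> = 8 * fact k * 5^k / real N + real k * 5^(k-1) * (3 * e)"
    by (simp add: field_simps)
  also have "\<dots> \<le> 8 * fact k * 5^k / real N + 8 * fact k * 5^k * e"
  proof -
    have "real k * 5^(k-1) * 3 \<le> fact k * 5^k * 8"
    proof (cases k)
      case (Suc j)
      have "real k \<le> fact k" by (metis fact_ge_self of_nat_fact of_nat_le_iff)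
      moreover have "(5::real)^(k-1) * 3 \<le> 5^k * 8" unfolding Suc by simp
      ultimately show ?thesis by (simp add: mult_mono mult.assoc)
    qed simp
    from mult_right_mono[OF this e0] show ?thesis unfolding e_def by (simp add: algebra_simps)
  qed
  also have "\<dots> = 8 * fact k * 5^k * (1 / real N + eps N)"
    unfolding e_def by (simp add: field_simps)
  finally show "\<bar>(\<Sum>\<nu>=0..N. wgt N a \<nu> * (xb + shift_h eps N \<nu>)^k) - (xb + a)^k\<bar>
            \<le> 8 * fact k * 5^k * (1 / real N + eps N)" .
qed



lemma eventually_inv_N: "\<delta> > 0 \<Longrightarrow> eventually (\<lambda>N. 1 / real N < \<delta>) sequentially"
  using order_tendstoD(2)[OF lim_1_over_n, of \<delta>] by simp

lemma entire_conv:
  fixes H :: "complex \<Rightarrow> complex" and E :: "(nat \<Rightarrow> real) set"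
  assumes hol: "H holomorphic_on UNIV"
    and hE: "\<forall>eps\<in>E. \<forall>N. N \<ge> 1 \<longrightarrow> 0 \<le> eps N \<and> eps N < 1"
    and sm0: "\<forall>\<delta>>0. eventually (\<lambda>N. \<forall>eps\<in>E. eps N < \<delta>) sequentially"
    and \<epsilon>: "\<epsilon> > 0"
  shows "eventually (\<lambda>N. \<forall>eps\<in>E. \<forall>a a'. \<bar>a\<bar> \<le> 2 \<longrightarrow> \<bar>a'\<bar> \<le> 2 \<longrightarrow>
     norm ((\<Sum>\<nu>=0..N. complex_of_real (wgt N a \<nu>) * H (complex_of_real (a' + shift_h eps N \<nu>)))
            - H (complex_of_real (a + a'))) < \<epsilon>) sequentially"
proof -
  have sm: "eventually (\<lambda>N. \<forall>eps\<in>E. eps N < \<delta>) sequentially" if "\<delta> > 0" for \<delta> using sm0 that by blast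
  define c where "c k = (deriv ^^ k) H 0 / fact k" for k
  have ser: "(\<lambda>k. c k * z^k) sums H z" for z
  proof -
    have "(\<lambda>n. (deriv ^^ n) H 0 / fact n * (z - 0)^n) sums H z"
      by (rule holomorphic_power_series[of H 0 "norm z + 1" z]) (auto intro: holomorphic_on_subset[OF hol])
    then show ?thesis unfolding c_def by simp
  qed
  have "summable (\<lambda>k. c k * 6^k)" using ser[of 6] by (simp add: sums_summable)
  from powser_insidea[OF this, of 5] have sb: "summable (\<lambda>k. norm (c k) * 5^k)"
    by (simp add: norm_mult norm_power)
  define b where "b k = norm (c k) * 5^k" for k
  have sb2: "summable (\<lambda>k. 2 * b k)" unfolding b_def using sb by (rule summable_mult)
  obtain K where K: "norm (\<Sum>i. 2 * b (i + K)) < \<epsilon>/2"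
    using suminf_exist_split[OF _ sb2, of "\<epsilon>/2"] \<epsilon> by auto
  define Cst where "Cst = (\<Sum>k<K. norm (c k) * (8 * fact k * 5^k))"
  have Cst0: "0 \<le> Cst" unfolding Cst_def by (intro sum_nonneg) auto
  define \<delta> where "\<delta> = \<epsilon> / (2 * (Cst + 1))"
  have \<delta>0: "\<delta> > 0" unfolding \<delta>_def using \<epsilon> Cst0 by simp
  have \<delta>C: "\<delta> * Cst < \<epsilon>/2"
  proof -
    have "\<delta> * Cst = \<epsilon> / 2 * (Cst / (Cst + 1))" unfolding \<delta>_def by (simp add: field_simps)
    also have "\<dots> < \<epsilon>/2 * 1" using \<epsilon> Cst0 by (intro mult_strict_left_mono) auto
    finally show ?thesis by simp
  qed
  have ev: "eventually (\<lambda>N. N \<ge> 1 \<and> 1 / real N < \<delta>/2 \<and> (\<forall>eps\<in>E. eps N < \<delta>/2)) sequentially"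
    using eventually_conj[OF eventually_ge_at_top[of 1] eventually_conj[OF eventually_inv_N[of "\<delta>/2"] sm[of "\<delta>/2"]]] \<delta>0
    by simp
  show ?thesis
    using ev
  proof (rule eventually_mono, intro ballI allI impI)
    fix N :: nat and eps :: "nat \<Rightarrow> real" and a a' :: real
    assume HN: "N \<ge> 1 \<and> 1 / real N < \<delta>/2 \<and> (\<forall>eps\<in>E. eps N < \<delta>/2)"
      and epsE: "eps \<in> E" and a2: "\<bar>a\<bar> \<le> 2" and a'2: "\<bar>a'\<bar> \<le> 2"
    have N1: "N \<ge> 1" using HN by simp
    have e0: "0 \<le> eps N" and e1: "eps N < 1" using hE epsE N1 by auto
    have eN: "1 / real N + eps N < \<delta>" using HN epsE by auto
    define P where "P k = (\<Sum>\<nu>=0..N. wgt N a \<nu> * (a' + shift_h eps N \<nu>)^k)" for k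
    define S where "S = (\<Sum>\<nu>=0..N. complex_of_real (wgt N a \<nu>) * H (complex_of_real (a' + shift_h eps N \<nu>)))"
    have sums1: "(\<lambda>k. c k * complex_of_real (P k)) sums S"
    proof -
      have "(\<lambda>k. \<Sum>\<nu>=0..N. complex_of_real (wgt N a \<nu>) * (c k * complex_of_real (a' + shift_h eps N \<nu>)^k)) sums S"
        unfolding S_def by (intro sums_sum sums_mult ser)
      moreover have "(\<lambda>k. \<Sum>\<nu>=0..N. complex_of_real (wgt N a \<nu>) * (c k * complex_of_real (a' + shift_h eps N \<nu>)^k))
           = (\<lambda>k. c k * complex_of_real (P k))"
        unfolding P_def by (auto simp: sum_distrib_left mult_ac)
      ultimately show ?thesis by simp
    qed
    have sums2: "(\<lambda>k. c k * complex_of_real ((a + a')^k)) sums H (complex_of_real (a + a'))"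
      using ser[of "complex_of_real (a + a')"] by simp
    define f where "f k = c k * complex_of_real (P k - (a + a')^k)" for k
    have sumsf: "f sums (S - H (complex_of_real (a + a')))"
      using sums_diff[OF sums1 sums2] unfolding f_def by (simp add: right_diff_distrib)
    define g where "g k = (if k < K then norm (c k) * (8 * fact k * 5^k) * \<delta> else 2 * b k)" for k
    have nf: "norm (f k) = norm (c k) * \<bar>P k - (a + a')^k\<bar>" for k
      by (simp only: f_def norm_mult norm_of_real)
    have fg: "norm (f k) \<le> g k" for k
    proof (cases "k < K")
      case True
      have "\<bar>P k - (a + a')^k\<bar> \<le> 8 * fact k * 5^k * (1 / real N + eps N)"
        unfolding P_def using moment(2)[where N=N and eps=eps and a=a and xb=a' and k=k, OF N1 e0 e1 a2 a'2] by (simp add: add.commute)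
      also have "\<dots> \<le> 8 * fact k * 5^k * \<delta>" using eN by (intro mult_left_mono) auto
      finally have "norm (c k) * \<bar>P k - (a + a')^k\<bar> \<le> norm (c k) * (8 * fact k * 5^k * \<delta>)"
        by (intro mult_left_mono) auto
      then show ?thesis using True unfolding g_def nf by (simp add: mult_ac)
    next
      case False
      have "\<bar>P k - (a + a')^k\<bar> \<le> \<bar>P k\<bar> + \<bar>a + a'\<bar>^k" using abs_triangle_ineq4[of "P k" "(a+a')^k"] by (simp add: power_abs)
      also have "\<dots> \<le> 5^k + 5^k"
      proof (rule add_mono)
        show "\<bar>P k\<bar> \<le> 5^k" unfolding P_def using moment(1)[where N=N and eps=eps and a=a and xb=a' and k=k, OF N1 e0 e1 a2 a'2] .
        show "\<bar>a + a'\<bar>^k \<le> 5^k" using a2 a'2 by (intro power_mono) auto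
      qed
      finally have "norm (c k) * \<bar>P k - (a + a')^k\<bar> \<le> norm (c k) * (2 * 5^k)"
        by (intro mult_left_mono) auto
      then show ?thesis using False unfolding g_def b_def nf by (simp add: mult_ac)
    qed
    have sg: "summable g"
    proof -
      have "eventually (\<lambda>k. g k = 2 * b k) sequentially"
        unfolding g_def using eventually_ge_at_top[of K] by (rule eventually_mono) auto
      from summable_cong[OF this] sb2 show ?thesis by simp
    qed
    have snf: "summable (\<lambda>k. norm (f k))"
      by (rule summable_comparison_test'[OF sg]) (use fg in auto)
    have "norm (S - H (complex_of_real (a + a'))) = norm (suminf f)" using sumsf by (simp add: sums_iff)
    also have "\<dots> \<le> (\<Sum>k. norm (f k))" by (rule summable_norm[OF snf])
    also have "\<dots> \<le> suminf g" by (rule suminf_le[OF fg snf sg])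
    also have "\<dots> = (\<Sum>i. g (i + K)) + (\<Sum>k<K. g k)" by (rule suminf_split_initial_segment[OF sg])
    also have "(\<Sum>i. g (i + K)) = (\<Sum>i. 2 * b (i + K))" unfolding g_def by simp
    also have "(\<Sum>k<K. g k) = \<delta> * Cst" unfolding g_def Cst_def by (simp add: sum_distrib_left mult_ac)
    also have "(\<Sum>i. 2 * b (i + K)) + \<delta> * Cst < \<epsilon>/2 + \<epsilon>/2"
      using K \<delta>C by (intro add_strict_mono) auto
    finally show "norm (S - H (complex_of_real (a + a'))) < \<epsilon>" by simp
  qed
qed



lemma h_bound:
  assumes N: "N \<ge> 1" and e0: "0 \<le> eps N" and e1: "eps N < 1" and nu: "\<nu> \<le> N"
  shows "\<bar>shift_h eps N \<nu>\<bar> \<le> 1"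
proof -
  define s where "s = real \<nu> + eps N * (real N - real \<nu>)"
  have s0: "0 \<le> s" unfolding s_def using e0 nu by simp
  have "eps N * (real N - real \<nu>) \<le> 1 * (real N - real \<nu>)" using e1 nu by (intro mult_right_mono) auto
  then have s1: "s \<le> real N" unfolding s_def by simp
  have Np: "real N > 0" using N by simp
  have "0 \<le> s / real N" "s / real N \<le> 1" using s0 s1 Np by (auto simp: divide_le_eq)
  moreover have "shift_h eps N \<nu> = 1 - 2 * (s / real N)" unfolding shift_h_def s_def by simp
  ultimately show ?thesis by linarith
qed

lemma wgt_sum: "(\<Sum>\<nu>=0..N. wgt N a \<nu>) = 1"
proof -
  have "((1-a)/2 + (1+a)/2)^N = (\<Sum>k\<le>N. of_nat (N choose k) * ((1-a)/2)^k * ((1+a)/2)^(N-k))"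
    by (rule binomial_ring)
  moreover have "(1-a)/2 + (1+a)/2 = (1::real)" by (simp add: field_simps)
  ultimately show ?thesis unfolding wgt_def atLeast0AtMost by (simp add: mult_ac)
qed

lemma wgt_nonneg: "\<bar>a\<bar> \<le> 1 \<Longrightarrow> 0 \<le> wgt N a \<nu>"
  unfolding wgt_def by (intro mult_nonneg_nonneg zero_le_power) auto

lemma wbad:
  fixes u v :: real
  assumes v0: "0 \<le> v" and v1: "v \<le> 31/30" and u: "\<bar>u\<bar> \<le> 1/27" and j: "j \<le> N" and jN: "N \<le> 3 * j"
  shows "real (N choose i) * \<bar>u\<bar>^j * v^(N-j) \<le> (31/45)^N"
proof -
  have "real (N choose i) \<le> 2^N" using binomial_le_pow2[of N i]
    by (metis of_nat_le_iff of_nat_numeral of_nat_power)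
  moreover have "\<bar>u\<bar>^j \<le> (1/3)^N"
  proof -
    have "\<bar>u\<bar>^j \<le> (1/27)^j" using u by (intro power_mono) auto
    also have "(1/27::real)^j = (1/3)^(3*j)" by (simp add: power_mult power_divide)
    also have "\<dots> \<le> (1/3)^N" using jN by (intro power_decreasing) auto
    finally show ?thesis .
  qed
  moreover have "v^(N-j) \<le> (31/30)^N"
  proof -
    have "v^(N-j) \<le> (31/30)^(N-j)" using v0 v1 by (intro power_mono) auto
    also have "\<dots> \<le> (31/30)^N" by (intro power_increasing) auto
    finally show ?thesis .
  qed
  ultimately have "real (N choose i) * \<bar>u\<bar>^j * v^(N-j) \<le> 2^N * (1/3)^N * (31/30)^N"
    using v0 by (intro mult_mono) auto
  also have "\<dots> = (31/45)^N" by (simp add: power_mult_distrib[symmetric])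
  finally show ?thesis .
qed

lemma bad_right:
  assumes N: "N \<ge> 1" and e0: "0 \<le> eps N" and e1: "eps N \<le> 1/10" and nu: "\<nu> \<le> N"
    and a': "a' > -1/30" and neg: "a' + shift_h eps N \<nu> < 0"
  shows "N \<le> 3 * \<nu>"
proof -
  define s where "s = real \<nu> + eps N * (real N - real \<nu>)"
  have Np: "real N > 0" using N by simp
  have "shift_h eps N \<nu> < 1/30" using neg a' by linarith
  then have "1 - 2 * s / real N < 1/30" unfolding shift_h_def s_def by simp
  then have "29/30 < 2 * s / real N" by linarith
  then have A: "29/30 * real N < 2 * s" using Np by (simp add: less_divide_eq)
  have "eps N * (real N - real \<nu>) \<le> 1/10 * real N"
    using e0 e1 nu by (intro mult_mono) auto
  then have "s \<le> real \<nu> + real N / 10" unfolding s_def by simp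
  with A Np have "real N \<le> 3 * real \<nu>" by linarith
  then show ?thesis by linarith
qed

lemma bad_left:
  assumes N: "N \<ge> 1" and e0: "0 \<le> eps N" and nu: "\<nu> \<le> N"
    and a': "a' < 1/30" and pos: "\<not> a' + shift_h eps N \<nu> < 0"
  shows "N \<le> 3 * (N - \<nu>)"
proof -
  define s where "s = real \<nu> + eps N * (real N - real \<nu>)"
  have Np: "real N > 0" using N by simp
  have "shift_h eps N \<nu> \<ge> -1/30" using pos a' by linarith
  then have "1 - 2 * s / real N \<ge> -1/30" unfolding shift_h_def s_def by simp
  then have "2 * s / real N \<le> 31/30" by linarith
  then have A: "2 * s \<le> 31/30 * real N" using Np by (simp add: divide_le_eq)
  have "0 \<le> eps N * (real N - real \<nu>)" using e0 nu by simp
  then have "real \<nu> \<le> s" unfolding s_def by simp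
  with A Np have "3 * real \<nu> \<le> 2 * real N" by linarith
  then have "3 * \<nu> \<le> 2 * N" by linarith
  then show ?thesis using nu by linarith
qed

lemma lim_bad: "(\<lambda>N. (real N + 1) * (31/45::real)^N) \<longlonglongrightarrow> 0"
proof -
  have "(\<lambda>N. real N * (31/45::real)^N + (31/45)^N) \<longlonglongrightarrow> 0 + 0"
    by (intro tendsto_add powser_times_n_limit_0 LIMSEQ_power_zero) auto
  then show ?thesis by (simp add: distrib_right)
qed



lemma bad_sum_bound:
  fixes Dr :: "real \<Rightarrow> complex"
  assumes MD: "\<And>x. x \<in> {-2..2} \<Longrightarrow> norm (Dr x) \<le> MD" and MD0: "0 \<le> MD"
    and bad: "\<And>\<nu>. \<nu> \<le> N \<Longrightarrow> B \<nu> \<Longrightarrow> \<bar>wgt N a \<nu>\<bar> \<le> (31/45)^N"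
    and xin: "\<And>\<nu>. \<nu> \<le> N \<Longrightarrow> a' + shift_h eps N \<nu> \<in> {-2..2}"
  shows "norm (\<Sum>\<nu>=0..N. complex_of_real (wgt N a \<nu>) * (if B \<nu> then Dr (a' + shift_h eps N \<nu>) else 0))
           \<le> (real N + 1) * (31/45)^N * MD"
proof -
  have "norm (\<Sum>\<nu>=0..N. complex_of_real (wgt N a \<nu>) * (if B \<nu> then Dr (a' + shift_h eps N \<nu>) else 0))
      \<le> (\<Sum>\<nu>=0..N. norm (complex_of_real (wgt N a \<nu>) * (if B \<nu> then Dr (a' + shift_h eps N \<nu>) else 0)))"
    by (rule norm_sum)
  also have "\<dots> \<le> (\<Sum>\<nu>=0..N. (31/45)^N * MD)"
  proof (rule sum_mono)
    fix \<nu> assume "\<nu> \<in> {0..N}"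
    then have nu: "\<nu> \<le> N" by simp
    show "norm (complex_of_real (wgt N a \<nu>) * (if B \<nu> then Dr (a' + shift_h eps N \<nu>) else 0)) \<le> (31/45)^N * MD"
    proof (cases "B \<nu>")
      case True
      have "norm (complex_of_real (wgt N a \<nu>) * Dr (a' + shift_h eps N \<nu>)) = \<bar>wgt N a \<nu>\<bar> * norm (Dr (a' + shift_h eps N \<nu>))"
        by (simp add: norm_mult)
      also have "\<dots> \<le> (31/45)^N * MD"
        using bad[OF nu True] MD[OF xin[OF nu]] by (intro mult_mono) auto
      finally show ?thesis using True by simp
    qed (use MD0 in simp)
  qed
  also have "\<dots> = (real N + 1) * (31/45)^N * MD" by simp
  finally show ?thesis .
qed

lemma conv_main:
  fixes Gm Gp :: "complex \<Rightarrow> complex" and psi :: "real \<Rightarrow> complex" and E :: "(nat \<Rightarrow> real) set"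
  assumes hm: "Gm holomorphic_on UNIV" and hp: "Gp holomorphic_on UNIV"
    and eq: "Gm (1/2) = Gp (1/2)"
    and psi: "psi = (\<lambda>a. if (1 + a) / 2 < 1/2 then Gm (complex_of_real ((1 + a) / 2))
                  else Gp (complex_of_real ((1 + a) / 2)))"
    and hE: "\<And>eps N. eps \<in> E \<Longrightarrow> N \<ge> 1 \<Longrightarrow> 0 \<le> eps N \<and> eps N < 1"
    and sm: "\<And>\<delta>. \<delta> > 0 \<Longrightarrow> eventually (\<lambda>N. \<forall>eps\<in>E. eps N < \<delta>) sequentially"
    and \<epsilon>: "\<epsilon> > 0"
  shows "continuous_on UNIV psi"
    and "eventually (\<lambda>N. \<forall>eps\<in>E. \<forall>(a, a')\<in>dom_A {-1 - 1/30 <..< 1 + 1/30}.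
            norm (supershift_S eps psi N a a' - psi (a + a')) < \<epsilon>) sequentially"
proof -
  define Hm where "Hm z = Gm ((1 + z) / 2)" for z
  define Hp where "Hp z = Gp ((1 + z) / 2)" for z
  have hHm: "Hm holomorphic_on UNIV"
  proof -
    have "(Gm \<circ> (\<lambda>z. (1 + z) / 2)) holomorphic_on UNIV"
      by (rule holomorphic_on_compose) (auto intro!: holomorphic_intros holomorphic_on_subset[OF hm])
    then show ?thesis unfolding Hm_def[abs_def] by (simp add: o_def)
  qed
  have hHp: "Hp holomorphic_on UNIV"
  proof -
    have "(Gp \<circ> (\<lambda>z. (1 + z) / 2)) holomorphic_on UNIV"
      by (rule holomorphic_on_compose) (auto intro!: holomorphic_intros holomorphic_on_subset[OF hp])
    then show ?thesis unfolding Hp_def[abs_def] by (simp add: o_def)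
  qed
  have psi_eq: "psi x = (if x < 0 then Hm (complex_of_real x) else Hp (complex_of_real x))" for x
    unfolding psi Hm_def Hp_def by (simp add: field_simps)
  have H0: "Hm (complex_of_real 0) = Hp (complex_of_real 0)" unfolding Hm_def Hp_def using eq by simp
  have cm: "continuous_on S (\<lambda>t. Hm (complex_of_real t))" for S
    by (rule continuous_on_compose2[OF holomorphic_on_imp_continuous_on[OF hHm]]) (auto intro!: continuous_intros)
  have cp: "continuous_on S (\<lambda>t. Hp (complex_of_real t))" for S
    by (rule continuous_on_compose2[OF holomorphic_on_imp_continuous_on[OF hHp]]) (auto intro!: continuous_intros)
  have psi_eq2: "psi = (\<lambda>t. if t \<le> 0 then Hm (complex_of_real t) else Hp (complex_of_real t))"
    using H0 by (auto simp: psi_eq fun_eq_iff)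
  have cpsi: "continuous_on UNIV psi"
    unfolding psi_eq2 by (rule continuous_on_cases_le[OF cm cp]) (use H0 in \<open>auto intro: continuous_intros\<close>)
  then show "continuous_on UNIV psi" .
  define Dr where "Dr t = Hp (complex_of_real t) - Hm (complex_of_real t)" for t
  have cD: "continuous_on {-2..2} Dr" unfolding Dr_def[abs_def] by (intro continuous_on_diff cm cp)
  obtain MD where MD0: "MD > 0" and MD: "\<And>x. x \<in> {-2..2} \<Longrightarrow> norm (Dr x) \<le> MD"
    using compact_imp_bounded[OF compact_continuous_image[OF cD compact_Icc]] unfolding bounded_pos by auto
  obtain MB where MB0: "MB > 0" and MB: "\<And>x. x \<in> {-2..2} \<Longrightarrow> norm (psi x) \<le> MB"
    using compact_imp_bounded[OF compact_continuous_image[OF continuous_on_subset[OF cpsi] compact_Icc[of "-2" "2::real"]]]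
    unfolding bounded_pos by auto
  have uc: "uniformly_continuous_on {-2..2::real} psi"
    by (rule compact_uniformly_continuous[OF continuous_on_subset[OF cpsi] compact_Icc]) auto
  obtain du where du0: "du > 0" and du: "\<And>x y. x \<in> {-2..2} \<Longrightarrow> y \<in> {-2..2} \<Longrightarrow> dist x y < du \<Longrightarrow> dist (psi x) (psi y) < \<epsilon>/2"
    using uc \<epsilon> unfolding uniformly_continuous_on_def by (metis half_gt_zero)
  define \<eta> where "\<eta> = \<epsilon> * du^2 / (1600 * (MB + 1))"
  have \<eta>0: "\<eta> > 0" unfolding \<eta>_def using \<epsilon> du0 MB0 by simp
  have ev1: "eventually (\<lambda>N. N \<ge> 1 \<and> 1 / real N < \<eta>/2 \<and> (\<forall>eps\<in>E. eps N < \<eta>/2) \<and> (\<forall>eps\<in>E. eps N < 1/10)) sequentially"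
    using eventually_conj[OF eventually_ge_at_top[of 1] eventually_conj[OF eventually_inv_N[of "\<eta>/2"]
          eventually_conj[OF sm[of "\<eta>/2"] sm[of "1/10"]]]] \<eta>0 by simp
  have ev2: "eventually (\<lambda>N. (real N + 1) * (31/45)^N * MD < \<epsilon>/2) sequentially"
  proof -
    have "(\<lambda>N. (real N + 1) * (31/45::real)^N * MD) \<longlonglongrightarrow> 0 * MD"
      by (intro tendsto_mult lim_bad tendsto_const)
    from order_tendstoD(2)[OF this, of "\<epsilon>/2"] show ?thesis using \<epsilon> by simp
  qed
  have hE': "\<forall>eps\<in>E. \<forall>N. N \<ge> 1 \<longrightarrow> 0 \<le> eps N \<and> eps N < 1" using hE by blast
  have sm': "\<forall>\<delta>>0. eventually (\<lambda>N. \<forall>eps\<in>E. eps N < \<delta>) sequentially" using sm by blast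
  note evp = entire_conv[OF hHp hE' sm' half_gt_zero[OF \<epsilon>]]
  note evm = entire_conv[OF hHm hE' sm' half_gt_zero[OF \<epsilon>]]
  show "eventually (\<lambda>N. \<forall>eps\<in>E. \<forall>(a, a')\<in>dom_A {-1 - 1/30 <..< 1 + 1/30}.
            norm (supershift_S eps psi N a a' - psi (a + a')) < \<epsilon>) sequentially"
    using eventually_conj[OF ev1 eventually_conj[OF ev2 eventually_conj[OF evp evm]]]
  proof (rule eventually_mono, safe)
    fix N :: nat and eps :: "nat \<Rightarrow> real" and a a' :: real
    assume HN: "N \<ge> 1" "1 / real N < \<eta>/2" "\<forall>eps\<in>E. eps N < \<eta>/2" "\<forall>eps\<in>E. eps N < 1/10"
      and bnd: "(real N + 1) * (31/45)^N * MD < \<epsilon>/2"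
      and EP: "\<forall>eps\<in>E. \<forall>a a'. \<bar>a\<bar> \<le> 2 \<longrightarrow> \<bar>a'\<bar> \<le> 2 \<longrightarrow>
     norm ((\<Sum>\<nu>=0..N. complex_of_real (wgt N a \<nu>) * Hp (complex_of_real (a' + shift_h eps N \<nu>)))
            - Hp (complex_of_real (a + a'))) < \<epsilon>/2"
      and EM: "\<forall>eps\<in>E. \<forall>a a'. \<bar>a\<bar> \<le> 2 \<longrightarrow> \<bar>a'\<bar> \<le> 2 \<longrightarrow>
     norm ((\<Sum>\<nu>=0..N. complex_of_real (wgt N a \<nu>) * Hm (complex_of_real (a' + shift_h eps N \<nu>)))
            - Hm (complex_of_real (a + a'))) < \<epsilon>/2"
      and epsE: "eps \<in> E" and dom: "(a, a') \<in> dom_A {-1 - 1/30 <..< 1 + 1/30}"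
    have N1: "N \<ge> 1" using HN by simp
    have e0: "0 \<le> eps N" and e1: "eps N < 1" using hE[OF epsE N1] by auto
    have e10: "eps N \<le> 1/10" using HN epsE by auto
    have eN: "1 / real N + eps N < \<eta>" using HN epsE by auto
    have a'1: "-1/30 < a'" "a' < 1/30" and aa': "-1 - 1/30 < a + a'" "a + a' < 1 + 1/30"
    proof -
      have "a' - 1 \<in> {-1 - 1/30 <..< 1 + 1/30::real}" "a' + 1 \<in> {-1 - 1/30 <..< 1 + 1/30::real}"
           "a + a' \<in> {-1 - 1/30 <..< 1 + 1/30::real}"
      proof -
        have sub: "{a' - 1..a' + 1} \<subseteq> {-1 - 1/30 <..< 1 + 1/30::real}" and "a + a' \<in> {-1 - 1/30 <..< 1 + 1/30::real}"
          using dom unfolding dom_A_def by auto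
        moreover have "a' - 1 \<in> {a' - 1..a' + 1}" "a' + 1 \<in> {a' - 1..a' + 1}" by auto
        ultimately show "a' - 1 \<in> {-1 - 1/30 <..< 1 + 1/30::real}" "a' + 1 \<in> {-1 - 1/30 <..< 1 + 1/30::real}"
           "a + a' \<in> {-1 - 1/30 <..< 1 + 1/30::real}" by blast+
      qed
      then show "-1/30 < a'" "a' < 1/30" "-1 - 1/30 < a + a'" "a + a' < 1 + 1/30" by auto
    qed
    have a2: "\<bar>a\<bar> \<le> 2" "\<bar>a'\<bar> \<le> 2" using a'1 aa' by auto
    define x where "x \<nu> = a' + shift_h eps N \<nu>" for \<nu>
    have xin: "x \<nu> \<in> {-2..2}" if "\<nu> \<le> N" for \<nu>
      using h_bound[where eps=eps and N=N, OF N1 e0 e1 that] a'1 unfolding x_def by auto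
    have yin: "a + a' \<in> {-2..2}" using aa' by auto
    have S: "supershift_S eps psi N a a' = (\<Sum>\<nu>=0..N. complex_of_real (wgt N a \<nu>) * psi (x \<nu>))"
      unfolding supershift_S_def wgt_def x_def ..
    consider "\<bar>a\<bar> \<le> 1" | "a \<ge> 1" | "a \<le> -1" by linarith
    then show "norm (supershift_S eps psi N a a' - psi (a + a')) < \<epsilon>"
    proof cases
      case 1
      define w where "w \<nu> = wgt N a \<nu>" for \<nu>
      have w0: "0 \<le> w \<nu>" for \<nu> unfolding w_def using 1 by (rule wgt_nonneg)
      have w1: "(\<Sum>\<nu>=0..N. w \<nu>) = 1" unfolding w_def by (rule wgt_sum)
      have "psi (a + a') = (\<Sum>\<nu>=0..N. complex_of_real (w \<nu>) * psi (a + a'))"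
        by (simp add: sum_distrib_right[symmetric] of_real_sum[symmetric] w1)
      then have "supershift_S eps psi N a a' - psi (a + a') = (\<Sum>\<nu>=0..N. complex_of_real (w \<nu>) * (psi (x \<nu>) - psi (a + a')))"
        unfolding S w_def by (simp add: sum_subtractf right_diff_distrib)
      then have "norm (supershift_S eps psi N a a' - psi (a + a')) \<le> (\<Sum>\<nu>=0..N. norm (complex_of_real (w \<nu>) * (psi (x \<nu>) - psi (a + a'))))"
        by (simp add: norm_sum)
      also have "\<dots> \<le> (\<Sum>\<nu>=0..N. w \<nu> * (\<epsilon>/2) + (2 * MB / du^2) * (w \<nu> * (-a + shift_h eps N \<nu>)^2))"
      proof (rule sum_mono)
        fix \<nu> assume "\<nu> \<in> {0..N}"
        then have nu: "\<nu> \<le> N" by simp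
        have nw: "norm (complex_of_real (w \<nu>) * (psi (x \<nu>) - psi (a + a'))) = w \<nu> * norm (psi (x \<nu>) - psi (a + a'))"
          using w0 by (simp add: norm_mult)
        have sq: "(-a + shift_h eps N \<nu>)^2 = (x \<nu> - (a + a'))^2" unfolding x_def by (simp add: algebra_simps)
        have t2: "0 \<le> (2 * MB / du^2) * (w \<nu> * (-a + shift_h eps N \<nu>)^2)" using MB0 w0 by simp
        show "norm (complex_of_real (w \<nu>) * (psi (x \<nu>) - psi (a + a'))) \<le> w \<nu> * (\<epsilon>/2) + (2 * MB / du^2) * (w \<nu> * (-a + shift_h eps N \<nu>)^2)"
        proof (cases "dist (x \<nu>) (a + a') < du")
          case True
          have "norm (psi (x \<nu>) - psi (a + a')) < \<epsilon>/2" using du[OF xin[OF nu] yin True] by (simp add: dist_norm)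
          then have "w \<nu> * norm (psi (x \<nu>) - psi (a + a')) \<le> w \<nu> * (\<epsilon>/2)" using w0 by (intro mult_left_mono) auto
          then show ?thesis unfolding nw using t2 by linarith
        next
          case False
          have "norm (psi (x \<nu>) - psi (a + a')) \<le> norm (psi (x \<nu>)) + norm (psi (a + a'))" by (rule norm_triangle_ineq4)
          also have "\<dots> \<le> 2 * MB" using MB[OF xin[OF nu]] MB[OF yin] by simp
          also have "\<dots> \<le> 2 * MB * ((x \<nu> - (a + a'))^2 / du^2)"
          proof -
            have "du^2 \<le> (x \<nu> - (a + a'))^2"
              using False du0 by (simp add: dist_real_def abs_le_square_iff[symmetric] not_less)
            then have "1 \<le> (x \<nu> - (a + a'))^2 / du^2" using du0 by simp
            then show ?thesis using MB0 mult_left_mono[of 1 "(x \<nu> - (a + a'))^2 / du^2" "2 * MB"] by simp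
          qed
          finally have "w \<nu> * norm (psi (x \<nu>) - psi (a + a')) \<le> w \<nu> * (2 * MB * ((x \<nu> - (a + a'))^2 / du^2))"
            using w0 by (intro mult_left_mono) auto
          also have "\<dots> = (2 * MB / du^2) * (w \<nu> * (-a + shift_h eps N \<nu>)^2)" unfolding sq by simp
          finally have "w \<nu> * norm (psi (x \<nu>) - psi (a + a')) \<le> (2 * MB / du^2) * (w \<nu> * (-a + shift_h eps N \<nu>)^2)" .
          moreover have "0 \<le> w \<nu> * (\<epsilon>/2)" using w0 \<epsilon> by simp
          ultimately show ?thesis unfolding nw by linarith
        qed
      qed
      also have "\<dots> = \<epsilon>/2 + (2 * MB / du^2) * (\<Sum>\<nu>=0..N. w \<nu> * (-a + shift_h eps N \<nu>)^2)"
        unfolding sum.distrib sum_distrib_left[symmetric] sum_distrib_right[symmetric] w1 by simp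
      also have "\<dots> < \<epsilon>/2 + \<epsilon>/2"
      proof -
        have "\<bar>(\<Sum>\<nu>=0..N. w \<nu> * (-a + shift_h eps N \<nu>)^2) - (-a + a)^2\<bar> \<le> 8 * fact 2 * 5^2 * (1 / real N + eps N)"
          unfolding w_def by (rule moment(2)) (use N1 e0 e1 a2 in auto)
        then have P2: "(\<Sum>\<nu>=0..N. w \<nu> * (-a + shift_h eps N \<nu>)^2) \<le> 400 * \<eta>"
          using eN by (simp add: fact_numeral)
        have "(2 * MB / du^2) * (\<Sum>\<nu>=0..N. w \<nu> * (-a + shift_h eps N \<nu>)^2) \<le> (2 * MB / du^2) * (400 * \<eta>)"
          using P2 MB0 by (intro mult_left_mono) auto
        also have "\<dots> = \<epsilon>/2 * (MB / (MB + 1))" unfolding \<eta>_def using du0 MB0 by (simp add: field_simps)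
        also have "\<dots> < \<epsilon>/2 * 1" using \<epsilon> MB0 by (intro mult_strict_left_mono) auto
        finally show ?thesis by simp
      qed
      finally show ?thesis by simp
    next
      case 2
      have pos: "\<not> a + a' < 0" using 2 a'1 by linarith
      have px: "psi t = Hp (complex_of_real t) - (if t < 0 then Dr t else 0)" for t
        unfolding psi_eq Dr_def by simp
      have SS: "supershift_S eps psi N a a' = (\<Sum>\<nu>=0..N. complex_of_real (wgt N a \<nu>) * Hp (complex_of_real (a' + shift_h eps N \<nu>)))
           - (\<Sum>\<nu>=0..N. complex_of_real (wgt N a \<nu>) * (if x \<nu> < 0 then Dr (a' + shift_h eps N \<nu>) else 0))"
        unfolding S px x_def by (simp add: right_diff_distrib sum_subtractf)
      have PS: "psi (a + a') = Hp (complex_of_real (a + a'))" using pos unfolding psi_eq by simp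
      have BB: "norm (\<Sum>\<nu>=0..N. complex_of_real (wgt N a \<nu>) * (if x \<nu> < 0 then Dr (a' + shift_h eps N \<nu>) else 0))
           \<le> (real N + 1) * (31/45)^N * MD"
      proof (rule bad_sum_bound[OF MD less_imp_le[OF MD0]])
        fix \<nu> assume nu: "\<nu> \<le> N" and b: "x \<nu> < 0"
        have "N \<le> 3 * \<nu>" using bad_right[where eps=eps and N=N, OF N1 e0 e10 nu a'1(1)] b unfolding x_def by simp
        moreover have "\<bar>wgt N a \<nu>\<bar> = real (N choose \<nu>) * \<bar>(1-a)/2\<bar>^\<nu> * ((1+a)/2)^(N-\<nu>)"
          unfolding wgt_def using 2 by (simp add: abs_mult power_abs)
        moreover have "\<bar>(1-a)/2\<bar> \<le> 1/27" using 2 aa' a'1 by (simp add: abs_if)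
        ultimately show "\<bar>wgt N a \<nu>\<bar> \<le> (31/45)^N"
          using wbad[where u="(1-a)/2" and v="(1+a)/2" and j=\<nu> and N=N and i=\<nu>] 2 aa' a'1 nu by simp
      qed (use xin x_def in auto)
      define SP where "SP = (\<Sum>\<nu>=0..N. complex_of_real (wgt N a \<nu>) * Hp (complex_of_real (a' + shift_h eps N \<nu>)))"
      define BS where "BS = (\<Sum>\<nu>=0..N. complex_of_real (wgt N a \<nu>) * (if x \<nu> < 0 then Dr (a' + shift_h eps N \<nu>) else 0))"
      have "supershift_S eps psi N a a' - psi (a + a') = (SP - Hp (complex_of_real (a + a'))) - BS"
        unfolding SS PS SP_def BS_def by simp
      then have "norm (supershift_S eps psi N a a' - psi (a + a')) \<le> norm (SP - Hp (complex_of_real (a + a'))) + norm BS"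
        by (simp add: norm_triangle_ineq4)
      moreover have "norm (SP - Hp (complex_of_real (a + a'))) < \<epsilon>/2" unfolding SP_def using EP epsE a2 by blast
      moreover have "norm BS < \<epsilon>/2" unfolding BS_def using BB bnd by linarith
      ultimately show ?thesis by linarith

    next
      case 3
      have neg: "a + a' < 0" using 3 a'1 by linarith
      have px: "psi t = Hm (complex_of_real t) + (if t < 0 then 0 else Dr t)" for t
        unfolding psi_eq Dr_def by simp
      have SS: "supershift_S eps psi N a a' = (\<Sum>\<nu>=0..N. complex_of_real (wgt N a \<nu>) * Hm (complex_of_real (a' + shift_h eps N \<nu>)))
           + (\<Sum>\<nu>=0..N. complex_of_real (wgt N a \<nu>) * (if \<not> x \<nu> < 0 then Dr (a' + shift_h eps N \<nu>) else 0))"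
        unfolding S px x_def distrib_left sum.distrib by (intro arg_cong2[where f="(+)"] refl sum.cong) auto
      have PS: "psi (a + a') = Hm (complex_of_real (a + a'))" using neg unfolding psi_eq by simp
      have BB: "norm (\<Sum>\<nu>=0..N. complex_of_real (wgt N a \<nu>) * (if \<not> x \<nu> < 0 then Dr (a' + shift_h eps N \<nu>) else 0))
           \<le> (real N + 1) * (31/45)^N * MD"
      proof (rule bad_sum_bound[OF MD less_imp_le[OF MD0]])
        fix \<nu> assume nu: "\<nu> \<le> N" and b: "\<not> x \<nu> < 0"
        have "N \<le> 3 * (N - \<nu>)" using bad_left[where eps=eps and N=N, OF N1 e0 nu a'1(2)] b unfolding x_def by simp
        moreover have "\<bar>wgt N a \<nu>\<bar> = real (N choose \<nu>) * \<bar>(1+a)/2\<bar>^(N-\<nu>) * ((1-a)/2)^(N-(N-\<nu>))"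
          unfolding wgt_def using 3 nu by (simp add: abs_mult power_abs)
        moreover have "\<bar>(1+a)/2\<bar> \<le> 1/27" using 3 aa' a'1 by (simp add: abs_if)
        ultimately show "\<bar>wgt N a \<nu>\<bar> \<le> (31/45)^N"
          using wbad[where u="(1+a)/2" and v="(1-a)/2" and j="N-\<nu>" and N=N and i=\<nu>] 3 aa' a'1 nu by simp
      qed (use xin x_def in auto)
      define SP where "SP = (\<Sum>\<nu>=0..N. complex_of_real (wgt N a \<nu>) * Hm (complex_of_real (a' + shift_h eps N \<nu>)))"
      define BS where "BS = (\<Sum>\<nu>=0..N. complex_of_real (wgt N a \<nu>) * (if \<not> x \<nu> < 0 then Dr (a' + shift_h eps N \<nu>) else 0))"
      have "supershift_S eps psi N a a' - psi (a + a') = (SP - Hm (complex_of_real (a + a'))) + BS"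
        unfolding SS PS SP_def BS_def by simp
      then have "norm (supershift_S eps psi N a a' - psi (a + a')) \<le> norm (SP - Hm (complex_of_real (a + a'))) + norm BS"
        by (simp add: norm_triangle_ineq)
      moreover have "norm (SP - Hm (complex_of_real (a + a'))) < \<epsilon>/2" unfolding SP_def using EM epsE a2 by blast
      moreover have "norm BS < \<epsilon>/2" unfolding BS_def using BB bnd by linarith
      ultimately show ?thesis by linarith

    qed
  qed
qed



lemma half_deriv:
  fixes G :: "complex \<Rightarrow> complex"
  assumes "G holomorphic_on UNIV"
  shows "((\<lambda>x::real. G (complex_of_real ((1 + x) / 2))) has_vector_derivative (deriv G (1/2) / 2)) (at 0)"
proof -
  have f: "((\<lambda>x::real. complex_of_real ((1 + x) / 2)) has_vector_derivative complex_of_real (1/2)) (at 0)"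
    by (rule has_vector_derivative_of_real) (auto intro!: derivative_eq_intros)
  have g: "(G has_field_derivative deriv G (1/2)) (at (complex_of_real ((1 + 0) / 2)))"
    using holomorphic_derivI[OF assms, of "1/2" UNIV] by simp
  from field_vector_diff_chain_at[OF f g] show ?thesis by (simp add: o_def mult.commute)
qed

lemma nondiff:
  fixes Gm Gp :: "complex \<Rightarrow> complex"
  assumes hm: "Gm holomorphic_on UNIV" and hp: "Gp holomorphic_on UNIV"
    and eq: "Gm (1/2) = Gp (1/2)"
    and ne: "deriv Gm (1/2) \<noteq> deriv Gp (1/2)"
  shows "\<not> ((\<lambda>a::real. if (1 + a) / 2 < 1/2 then Gm (complex_of_real ((1 + a) / 2))
                  else Gp (complex_of_real ((1 + a) / 2))) differentiable (at 0))"
proof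
  define psi where "psi = (\<lambda>a::real. if (1 + a) / 2 < 1/2 then Gm (complex_of_real ((1 + a) / 2))
                  else Gp (complex_of_real ((1 + a) / 2)))"
  assume "psi differentiable (at 0)"
  then have D: "(psi has_vector_derivative vector_derivative psi (at 0)) (at 0)"
    using vector_derivative_works by blast
  have L: "(psi has_vector_derivative (deriv Gm (1/2) / 2)) (at 0 within {..0})"
  proof (rule has_vector_derivative_transform)
    show "(0::real) \<in> {..0}" by simp
    show "psi x = Gm (complex_of_real ((1 + x) / 2))" if "x \<in> {..0}" for x
      using that eq unfolding psi_def by (cases "x = 0") auto
    show "((\<lambda>x. Gm (complex_of_real ((1 + x) / 2))) has_vector_derivative deriv Gm (1/2) / 2) (at 0 within {..0})"
      using half_deriv[OF hm] by (rule has_vector_derivative_at_within)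
  qed
  have R: "(psi has_vector_derivative (deriv Gp (1/2) / 2)) (at 0 within {0..})"
  proof (rule has_vector_derivative_transform)
    show "(0::real) \<in> {0..}" by simp
    show "psi x = Gp (complex_of_real ((1 + x) / 2))" if "x \<in> {0..}" for x
      using that unfolding psi_def by auto
    show "((\<lambda>x. Gp (complex_of_real ((1 + x) / 2))) has_vector_derivative deriv Gp (1/2) / 2) (at 0 within {0..})"
      using half_deriv[OF hp] by (rule has_vector_derivative_at_within)
  qed
  have nbL: "at (0::real) within {..0} \<noteq> bot"
  proof
    assume "at (0::real) within {..0} = bot"
    moreover have "at_left (0::real) \<le> at 0 within {..0}" by (rule at_le) auto
    ultimately have "at_left (0::real) = bot" by (simp add: bot_unique)
    then show False using trivial_limit_at_left_real by blast
  qed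
  have nbR: "at (0::real) within {0..} \<noteq> bot"
  proof
    assume "at (0::real) within {0..} = bot"
    moreover have "at_right (0::real) \<le> at 0 within {0..}" by (rule at_le) auto
    ultimately have "at_right (0::real) = bot" by (simp add: bot_unique)
    then show False using trivial_limit_at_right_real by blast
  qed
  have "vector_derivative psi (at 0) = deriv Gm (1/2) / 2"
    by (rule vector_derivative_unique_within[OF nbL has_vector_derivative_at_within[OF D] L])
  moreover have "vector_derivative psi (at 0) = deriv Gp (1/2) / 2"
    by (rule vector_derivative_unique_within[OF nbR has_vector_derivative_at_within[OF D] R])
  ultimately show False using ne by simp
qed

theorem mainTheorem5:
  fixes Gm Gp :: "complex \<Rightarrow> complex"
  assumes "Gm holomorphic_on UNIV" and "Gp holomorphic_on UNIV"
    and "Gm (1/2) = Gp (1/2)"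
    and "deriv Gm (1/2) \<noteq> deriv Gp (1/2)"
  shows "\<exists>\<rho>0>0. regular_C_supershift {-1 - \<rho>0 <..< 1 + \<rho>0}
            (\<lambda>a. if (1 + a) / 2 < 1/2 then Gm (complex_of_real ((1 + a) / 2))
                  else Gp (complex_of_real ((1 + a) / 2)))
       \<and> \<not> ((\<lambda>a::real. if (1 + a) / 2 < 1/2 then Gm (complex_of_real ((1 + a) / 2))
                  else Gp (complex_of_real ((1 + a) / 2))) differentiable (at 0))"
proof (intro exI[of _ "1/30"] conjI)
  define psi where "psi = (\<lambda>a::real. if (1 + a) / 2 < 1/2 then Gm (complex_of_real ((1 + a) / 2))
                  else Gp (complex_of_real ((1 + a) / 2)))"
  note CM = conv_main[OF assms(1,2,3) psi_def]
  show "(1/30::real) > 0" by simp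
  show "\<not> ((\<lambda>a::real. if (1 + a) / 2 < 1/2 then Gm (complex_of_real ((1 + a) / 2))
                  else Gp (complex_of_real ((1 + a) / 2))) differentiable (at 0))"
    by (rule nondiff[OF assms])
  have cont: "continuous_on UNIV psi"
    by (rule CM(1)[of "{}" 1]) auto
  have part2: "eventually (\<lambda>N. \<forall>eps\<in>E. \<forall>(a, a')\<in>K. norm (supershift_S eps psi N a a' - psi (a + a')) < e) sequentially"
    if adm: "\<forall>eps\<in>E. admissible_seq eps" and sm: "\<forall>\<delta>>0. \<forall>\<^sub>F N in sequentially. \<forall>eps\<in>E. eps N < \<delta>"
      and K: "K \<subseteq> dom_A {-1 - 1/30 <..< 1 + 1/30}" and e: "e > 0" for E K e
  proof -
    have "eventually (\<lambda>N. \<forall>eps\<in>E. \<forall>(a, a')\<in>dom_A {-1 - 1/30 <..< 1 + 1/30}.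
            norm (supershift_S eps psi N a a' - psi (a + a')) < e) sequentially"
      by (rule CM(2)) (use adm sm e in \<open>auto simp: admissible_seq_def\<close>)
    then show ?thesis by (rule eventually_mono) (use K in blast)
  qed
  show "regular_C_supershift {-1 - 1/30 <..< 1 + 1/30} psi"
    unfolding regular_C_supershift_def
  proof (intro conjI allI impI)
    show "continuous_on {-1 - 1/30 <..< 1 + 1/30} psi" using cont by (rule continuous_on_subset) auto
  next
    fix eps K
    assume adm: "admissible_seq eps" and K: "compact K \<and> K \<subseteq> dom_A {-1 - 1/30 <..< 1 + 1/30}"
    have sm: "\<forall>\<delta>>0. \<forall>\<^sub>F N in sequentially. \<forall>eps'\<in>{eps}. eps' N < \<delta>"
      using adm unfolding admissible_seq_def by (auto dest: order_tendstoD(2))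
    have ev: "eventually (\<lambda>N. \<forall>x\<in>K. dist (case x of (a, a') \<Rightarrow> supershift_S eps psi N a a') (case x of (a, a') \<Rightarrow> psi (a + a')) < e) sequentially"
      if e: "e > 0" for e :: real
    proof -
      have "eventually (\<lambda>N. \<forall>eps'\<in>{eps}. \<forall>(a, a')\<in>K. norm (supershift_S eps' psi N a a' - psi (a + a')) < e) sequentially"
        by (rule part2) (use adm sm K e in auto)
      then show ?thesis by (rule eventually_mono) (auto simp: dist_norm)
    qed
    show "uniform_limit K (\<lambda>N (a, a'). supershift_S eps psi N a a') (\<lambda>(a, a'). psi (a + a')) sequentially"
      by (rule uniform_limitI) (use ev in simp)
  next
    fix E :: "(nat \<Rightarrow> real) set" and K and e :: real
    assume H: "(\<forall>eps\<in>E. admissible_seq eps) \<and> (\<forall>\<delta>>0. \<forall>\<^sub>F N in sequentially. \<forall>eps\<in>E. eps N < \<delta>)"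
      and K: "compact K \<and> K \<subseteq> dom_A {-1 - 1/30 <..< 1 + 1/30}" and e: "e > 0"
    show "\<forall>\<^sub>F N in sequentially. \<forall>eps\<in>E. \<forall>(a, a')\<in>K. norm (supershift_S eps psi N a a' - psi (a + a')) < e"
      using part2 H K e by blast
  qed
qed


end
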